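(* Let $p\ge1$ and $z$ be integers with $1\le z\le 2p-1$, $Z=\{-z+1,\dots,2p-z\}$, $Z'=\{-z,\dots,2p-z\}$. Let $h$ be an entropy conservative, symmetric, consistent and smooth two-point flux with entropy flux $H$, and let $A=(A_{lm})_{l,m\in Z}$, $B=(B_{lm})_{l,m\in Z'}$ be real matrices inducing an entropy conservative flux combination, i.e. with $\tilde A_{lm}:=A_{l+1,m+1}$ if $l+1,m+1\in Z$ and $\tilde A_{lm}:=0$ otherwise ($l,m\in Z'$), and $v_m:=(B_{0m}-\tilde A_{0m})+(B_{m0}-\tilde A_{m0})$: $\sum_{l,m\in Z'}\tilde A_{lm}=\sum_{l,m\in Z'}B_{lm}=1$, $\tilde A_{lm}=B_{lm}$ for $l,m\in Z'\setminus\{0\}$, $A_{ll}=0$ for $l\in Z$, and $v_0=0$. Let $g$ be an entropy dissipative two-point flux with entropy flux $G$, let $\alpha\in[0,1]$, and assume $A_{01}\ge0$, $A_{10}\ge0$, $B_{01}\ge0$, $B_{10}\ge0$. Define the families $$\varphi_{lm}(a,b)=\begin{cases}\alpha g(a,b)+(1-\alpha)h(a,b),&(l,m)=(0,1),\\ \alpha g(b,a)+(1-\alpha)h(a,b),&(l,m)=(1,0),\\ h(a,b),&\text{otherwise},\end{cases}\qquad \Phi_{lm}(a,b)=\begin{cases}\alpha G(a,b)+(1-\alpha)H(a,b),&(l,m)=(0,1),\\ \alpha G(b,a)+(1-\alpha)H(a,b),&(l,m)=(1,0),\\ H(a,b),&\text{otherwise},\end{cases}$$ and the general linear combined fluxes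 $$f_{k-\frac12}=\sum_{l,m\in Z}A_{lm}\varphi_{lm}(u_{k-1+l},u_{k-1+m}),\qquad f_{k+\frac12}=\sum_{l,m\in Z'}B_{lm}\varphi_{lm}(u_{k+l},u_{k+m}),$$ with $F_{k\pm\frac12}$ defined identically with $\Phi_{lm}$ in place of $\varphi_{lm}$. Then the resulting flux is entropy dissipative with numerical entropy flux $F$: for all states, $v(u_k)\cdot(f_{k-\frac12}-f_{k+\frac12})\le F_{k-\frac12}-F_{k+\frac12}$, so that along solutions of $\frac{\mathrm{d}u_k}{\mathrm{d}t}=\frac1{\Delta x}(f_{k-\frac12}-f_{k+\frac12})$ one has $\frac{\mathrm{d}}{\mathrm{d}t}U(u_k)\le\frac1{\Delta x}(F_{k-\frac12}-F_{k+\frac12})$.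
   Context: Conservation law $\partial_t u+\partial_x f(u)=0$, $u\in\mathbb{R}^N$, with smooth strictly convex entropy $U$, entropy flux $F$, entropy variable $v(u)=\nabla U(u)$, potential $\psi(u)=v(u)\cdot f(u)-F(u)$. A two-point flux $h$ is symmetric if $h(a,b)=h(b,a)$, consistent if $h(a,a)=f(a)$, entropy conservative if $(v(b)-v(a))\cdot h(a,b)=\psi(b)-\psi(a)$ for all $a,b$, with entropy flux $H(a,b)=\tfrac12(v(a)+v(b))\cdot h(a,b)-\tfrac12(\psi(a)+\psi(b))$. A two-point flux $g$ is entropy dissipative if $(v(b)-v(a))\cdot g(a,b)-(\psi(b)-\psi(a))\le0$ for all $a,b$, with entropy flux $G(a,b)=\tfrac12(v(a)+v(b))\cdot g(a,b)-\tfrac12(\psi(a)+\psi(b))$. Uniform mesh width $\Delta x$. *)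

theory Defs
  imports "HOL-Analysis.Analysis"
begin

text \<open>States u live in a Euclidean space 'a (playing the role of R^N).
  v is the entropy variable (gradient of U), psi the entropy potential.\<close>

definition strictly_convex_on :: "'a::real_vector set \<Rightarrow> ('a \<Rightarrow> real) \<Rightarrow> bool" where
  "strictly_convex_on S U \<longleftrightarrow> convex S \<and>
     (\<forall>x\<in>S. \<forall>y\<in>S. \<forall>t. x \<noteq> y \<and> 0 < t \<and> t < 1 \<longrightarrow>
        U ((1 - t) *\<^sub>R x + t *\<^sub>R y) < (1 - t) * U x + t * U y)"

definition potential :: "('a::real_inner \<Rightarrow> 'a) \<Rightarrow> ('a \<Rightarrow> 'a) \<Rightarrow> ('a \<Rightarrow> real) \<Rightarrow> 'a \<Rightarrow> real" where
  "potential v f F u = v u \<bullet> f u - F u"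

definition symmetric_flux :: "('a \<Rightarrow> 'a \<Rightarrow> 'b) \<Rightarrow> bool" where
  "symmetric_flux h \<longleftrightarrow> (\<forall>a b. h a b = h b a)"

definition consistent_flux :: "('a \<Rightarrow> 'b) \<Rightarrow> ('a \<Rightarrow> 'a \<Rightarrow> 'b) \<Rightarrow> bool" where
  "consistent_flux f h \<longleftrightarrow> (\<forall>a. h a a = f a)"

definition entropy_conservative ::
  "('a::real_inner \<Rightarrow> 'a) \<Rightarrow> ('a \<Rightarrow> real) \<Rightarrow> ('a \<Rightarrow> 'a \<Rightarrow> 'a) \<Rightarrow> bool" where
  "entropy_conservative v psi h \<longleftrightarrow> (\<forall>a b. (v b - v a) \<bullet> h a b = psi b - psi a)"

definition entropy_dissipative ::
  "('a::real_inner \<Rightarrow> 'a) \<Rightarrow> ('a \<Rightarrow> real) \<Rightarrow> ('a \<Rightarrow> 'a \<Rightarrow> 'a) \<Rightarrow> bool" where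
  "entropy_dissipative v psi g \<longleftrightarrow> (\<forall>a b. (v b - v a) \<bullet> g a b - (psi b - psi a) \<le> 0)"

definition two_point_entropy_flux ::
  "('a::real_inner \<Rightarrow> 'a) \<Rightarrow> ('a \<Rightarrow> real) \<Rightarrow> ('a \<Rightarrow> 'a \<Rightarrow> 'a) \<Rightarrow> 'a \<Rightarrow> 'a \<Rightarrow> real" where
  "two_point_entropy_flux v psi h a b =
     (1/2) * ((v a + v b) \<bullet> h a b) - (1/2) * (psi a + psi b)"

definition Zset :: "int \<Rightarrow> int \<Rightarrow> int set" where
  "Zset p z = {-z+1..2*p-z}"

definition Zset' :: "int \<Rightarrow> int \<Rightarrow> int set" where
  "Zset' p z = {-z..2*p-z}"

definition Atilde :: "int \<Rightarrow> int \<Rightarrow> (int \<Rightarrow> int \<Rightarrow> real) \<Rightarrow> int \<Rightarrow> int \<Rightarrow> real" where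
  "Atilde p z A l m =
     (if l + 1 \<in> Zset p z \<and> m + 1 \<in> Zset p z then A (l+1) (m+1) else 0)"

definition vcoef :: "int \<Rightarrow> int \<Rightarrow> (int \<Rightarrow> int \<Rightarrow> real) \<Rightarrow> (int \<Rightarrow> int \<Rightarrow> real) \<Rightarrow> int \<Rightarrow> real" where
  "vcoef p z A B m = (B 0 m - Atilde p z A 0 m) + (B m 0 - Atilde p z A m 0)"

definition ec_flux_combination ::
  "int \<Rightarrow> int \<Rightarrow> (int \<Rightarrow> int \<Rightarrow> real) \<Rightarrow> (int \<Rightarrow> int \<Rightarrow> real) \<Rightarrow> bool" where
  "ec_flux_combination p z A B \<longleftrightarrow>
     (\<Sum>(l,m)\<in>Zset' p z \<times> Zset' p z. Atilde p z A l m) = 1 \<and>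
     (\<Sum>(l,m)\<in>Zset' p z \<times> Zset' p z. B l m) = 1 \<and>
     (\<forall>l\<in>Zset' p z - {0}. \<forall>m\<in>Zset' p z - {0}. Atilde p z A l m = B l m) \<and>
     (\<forall>l\<in>Zset p z. A l l = 0) \<and>
     vcoef p z A B 0 = 0"

text \<open>The families phi_lm (used with fluxes g,h) and Phi_lm (used with entropy fluxes G,H).\<close>
definition mixfam :: "real \<Rightarrow> ('a \<Rightarrow> 'a \<Rightarrow> 'b::real_vector) \<Rightarrow> ('a \<Rightarrow> 'a \<Rightarrow> 'b) \<Rightarrow>
    int \<Rightarrow> int \<Rightarrow> 'a \<Rightarrow> 'a \<Rightarrow> 'b" where
  "mixfam \<alpha> g h l m a b =
     (if (l,m) = (0,1) then \<alpha> *\<^sub>R g a b + (1-\<alpha>) *\<^sub>R h a b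
      else if (l,m) = (1,0) then \<alpha> *\<^sub>R g b a + (1-\<alpha>) *\<^sub>R h a b
      else h a b)"

definition flux_left :: "int \<Rightarrow> int \<Rightarrow> (int \<Rightarrow> int \<Rightarrow> real) \<Rightarrow>
    (int \<Rightarrow> int \<Rightarrow> 'a \<Rightarrow> 'a \<Rightarrow> 'b::real_vector) \<Rightarrow> (int \<Rightarrow> 'a) \<Rightarrow> int \<Rightarrow> 'b" where
  "flux_left p z A \<phi> u k =
     (\<Sum>(l,m)\<in>Zset p z \<times> Zset p z. A l m *\<^sub>R \<phi> l m (u (k-1+l)) (u (k-1+m)))"

definition flux_right :: "int \<Rightarrow> int \<Rightarrow> (int \<Rightarrow> int \<Rightarrow> real) \<Rightarrow>
    (int \<Rightarrow> int \<Rightarrow> 'a \<Rightarrow> 'a \<Rightarrow> 'b::real_vector) \<Rightarrow> (int \<Rightarrow> 'a) \<Rightarrow> int \<Rightarrow> 'b" where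
  "flux_right p z B \<phi> u k =
     (\<Sum>(l,m)\<in>Zset' p z \<times> Zset' p z. B l m *\<^sub>R \<phi> l m (u (k+l)) (u (k+m)))"

end

theory Submission
  imports Defs
begin

lemma ec_left:
  assumes "entropy_conservative v psi h"
  shows "v a \<bullet> h a b - two_point_entropy_flux v psi h a b = psi a"
proof -
  have "(v b - v a) \<bullet> h a b = psi b - psi a" using assms unfolding entropy_conservative_def by blast
  thus ?thesis unfolding two_point_entropy_flux_def by (simp add: inner_diff_left inner_add_left field_simps)
qed

lemma ec_right:
  assumes "entropy_conservative v psi h"
  shows "v b \<bullet> h a b - two_point_entropy_flux v psi h a b = psi b"
proof -
  have "(v b - v a) \<bullet> h a b = psi b - psi a" using assms unfolding entropy_conservative_def by blast
  thus ?thesis unfolding two_point_entropy_flux_def by (simp add: inner_diff_left inner_add_left field_simps)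
qed

lemma ed_left:
  assumes "entropy_dissipative v psi g"
  shows "v a \<bullet> g a b - two_point_entropy_flux v psi g a b \<ge> psi a"
proof -
  have "(v b - v a) \<bullet> g a b - (psi b - psi a) \<le> 0" using assms unfolding entropy_dissipative_def by blast
  thus ?thesis unfolding two_point_entropy_flux_def by (simp add: inner_diff_left inner_add_left field_simps)
qed

lemma ed_right:
  assumes "entropy_dissipative v psi g"
  shows "v b \<bullet> g a b - two_point_entropy_flux v psi g a b \<le> psi b"
proof -
  have "(v b - v a) \<bullet> g a b - (psi b - psi a) \<le> 0" using assms unfolding entropy_dissipative_def by blast
  thus ?thesis unfolding two_point_entropy_flux_def by (simp add: inner_diff_left inner_add_left field_simps)
qed

lemma mix_expand:
  fixes c :: "'a::real_inner"
  shows "c \<bullet> (\<alpha> *\<^sub>R x + (1-\<alpha>) *\<^sub>R y) - (\<alpha> * X + (1-\<alpha>) * Y)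
     = \<alpha> * (c \<bullet> x - X) + (1-\<alpha>) * (c \<bullet> y - Y)"
  by (simp add: inner_add_right algebra_simps)

lemma convex_ge:
  fixes \<alpha> :: real
  assumes "0 \<le> \<alpha>" "\<alpha> \<le> 1" "P \<ge> q" "Q = q"
  shows "\<alpha> * P + (1-\<alpha>) * Q \<ge> q"
proof -
  have "\<alpha> * P \<ge> \<alpha> * q" using assms by (simp add: mult_left_mono)
  thus ?thesis using assms by (simp add: algebra_simps)
qed

lemma convex_le:
  fixes \<alpha> :: real
  assumes "0 \<le> \<alpha>" "\<alpha> \<le> 1" "P \<le> q" "Q = q"
  shows "\<alpha> * P + (1-\<alpha>) * Q \<le> q"
proof -
  have "\<alpha> * P \<le> \<alpha> * q" using assms by (simp add: mult_left_mono)
  thus ?thesis using assms by (simp add: algebra_simps)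
qed


lemma mix_01: "mixfam \<alpha> g h 0 1 a b = \<alpha> *\<^sub>R g a b + (1-\<alpha>) *\<^sub>R h a b"
  by (auto simp add: mixfam_def)
lemma mix_10: "mixfam \<alpha> g h 1 0 a b = \<alpha> *\<^sub>R g b a + (1-\<alpha>) *\<^sub>R h a b"
  by (auto simp add: mixfam_def)
lemma mix_other: "(l,m) \<noteq> (0,1) \<Longrightarrow> (l,m) \<noteq> (1,0) \<Longrightarrow> mixfam \<alpha> g h l m a b = h a b"
  by (auto simp add: mixfam_def)

lemma termL:
  fixes v :: "'a::real_inner \<Rightarrow> 'a" and u :: "int \<Rightarrow> 'a" and k :: int
  assumes hec: "entropy_conservative v P h" and ged: "entropy_dissipative v P g"
    and a0: "0 \<le> \<alpha>" and a1: "\<alpha> \<le> 1" and A01: "A 0 1 \<ge> 0" and A10: "A 1 0 \<ge> 0"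
  defines "Ht \<equiv> two_point_entropy_flux v P h" and "Gt \<equiv> two_point_entropy_flux v P g"
  defines "w \<equiv> (\<lambda>l m. if l = 0 \<or> m = 0 then P (u k) else v (u k) \<bullet> h (u (k+l)) (u (k+m)) - Ht (u (k+l)) (u (k+m)))"
  shows "A l m * (v (u k) \<bullet> mixfam \<alpha> g h l m (u (k-1+l)) (u (k-1+m)) - mixfam \<alpha> Gt Ht l m (u (k-1+l)) (u (k-1+m)))
     \<le> A l m * w (l-1) (m-1)"
proof -
  consider "(l,m) = (0,1)" | "(l,m) = (1,0)" | "(l,m) \<noteq> (0,1) \<and> (l,m) \<noteq> (1,0)" by blast
  then show ?thesis
  proof cases
    case 1
    hence lm: "l = 0" "m = 1" by auto
    have "v (u k) \<bullet> mixfam \<alpha> g h 0 1 (u (k-1)) (u k) - mixfam \<alpha> Gt Ht 0 1 (u (k-1)) (u k) \<le> P (u k)"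
      unfolding mix_01 mix_expand real_scaleR_def
      apply (rule convex_le[OF a0 a1])
      using ed_right[OF ged] ec_right[OF hec] unfolding Ht_def Gt_def by auto
    moreover have "w (l-1) (m-1) = P (u k)" using lm unfolding w_def by simp
    ultimately show ?thesis using lm A01 by (simp add: mult_left_mono)
  next
    case 2
    hence lm: "l = 1" "m = 0" by auto
    have "v (u k) \<bullet> mixfam \<alpha> g h 1 0 (u k) (u (k-1)) - mixfam \<alpha> Gt Ht 1 0 (u k) (u (k-1)) \<le> P (u k)"
      unfolding mix_10 mix_expand real_scaleR_def
      apply (rule convex_le[OF a0 a1])
      using ed_right[OF ged] ec_left[OF hec] unfolding Ht_def Gt_def by auto
    moreover have "w (l-1) (m-1) = P (u k)" using lm unfolding w_def by simp
    ultimately show ?thesis using lm A10 by (simp add: mult_left_mono)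
  next
    case 3
    hence mf: "mixfam \<alpha> g h l m x y = h x y" "mixfam \<alpha> Gt Ht l m x y = Ht x y" for x y
      by (auto simp: mix_other)
    have e1: "k-1+l = k+(l-1)" "k-1+m = k+(m-1)" by auto
    have "v (u k) \<bullet> h (u (k-1+l)) (u (k-1+m)) - Ht (u (k-1+l)) (u (k-1+m)) = w (l-1) (m-1)"
    proof (cases "l = 1")
      case True thus ?thesis unfolding w_def Ht_def using ec_left[OF hec] by simp
    next
      case False
      show ?thesis
      proof (cases "m = 1")
        case True thus ?thesis unfolding w_def Ht_def using ec_right[OF hec] by simp
      next
        case False2: False
        thus ?thesis using False unfolding w_def e1 by simp
      qed
    qed
    thus ?thesis unfolding mf by simp
  qed
qed

lemma termR:
  fixes v :: "'a::real_inner \<Rightarrow> 'a" and u :: "int \<Rightarrow> 'a" and k :: int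
  assumes hec: "entropy_conservative v P h" and ged: "entropy_dissipative v P g"
    and a0: "0 \<le> \<alpha>" and a1: "\<alpha> \<le> 1" and B01: "B 0 1 \<ge> 0" and B10: "B 1 0 \<ge> 0"
  defines "Ht \<equiv> two_point_entropy_flux v P h" and "Gt \<equiv> two_point_entropy_flux v P g"
  defines "w \<equiv> (\<lambda>l m. if l = 0 \<or> m = 0 then P (u k) else v (u k) \<bullet> h (u (k+l)) (u (k+m)) - Ht (u (k+l)) (u (k+m)))"
  shows "B l m * w l m \<le> B l m * (v (u k) \<bullet> mixfam \<alpha> g h l m (u (k+l)) (u (k+m)) - mixfam \<alpha> Gt Ht l m (u (k+l)) (u (k+m)))"
proof -
  consider "(l,m) = (0,1)" | "(l,m) = (1,0)" | "(l,m) \<noteq> (0,1) \<and> (l,m) \<noteq> (1,0)" by blast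
  then show ?thesis
  proof cases
    case 1
    hence lm: "l = 0" "m = 1" by auto
    have "v (u k) \<bullet> mixfam \<alpha> g h 0 1 (u k) (u (k+1)) - mixfam \<alpha> Gt Ht 0 1 (u k) (u (k+1)) \<ge> P (u k)"
      unfolding mix_01 mix_expand real_scaleR_def
      apply (rule convex_ge[OF a0 a1])
      using ed_left[OF ged] ec_left[OF hec] unfolding Ht_def Gt_def by auto
    moreover have "w l m = P (u k)" using lm unfolding w_def by simp
    ultimately show ?thesis using lm B01 by (simp add: mult_left_mono)
  next
    case 2
    hence lm: "l = 1" "m = 0" by auto
    have "v (u k) \<bullet> mixfam \<alpha> g h 1 0 (u (k+1)) (u k) - mixfam \<alpha> Gt Ht 1 0 (u (k+1)) (u k) \<ge> P (u k)"
      unfolding mix_10 mix_expand real_scaleR_def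
      apply (rule convex_ge[OF a0 a1])
      using ed_left[OF ged] ec_right[OF hec] unfolding Ht_def Gt_def by auto
    moreover have "w l m = P (u k)" using lm unfolding w_def by simp
    ultimately show ?thesis using lm B10 by (simp add: mult_left_mono)
  next
    case 3
    hence mf: "mixfam \<alpha> g h l m x y = h x y" "mixfam \<alpha> Gt Ht l m x y = Ht x y" for x y
      by (auto simp: mix_other)
    have "v (u k) \<bullet> h (u (k+l)) (u (k+m)) - Ht (u (k+l)) (u (k+m)) = w l m"
    proof (cases "l = 0")
      case True thus ?thesis unfolding w_def Ht_def using ec_left[OF hec] by simp
    next
      case False
      show ?thesis
      proof (cases "m = 0")
        case True thus ?thesis unfolding w_def Ht_def using ec_right[OF hec] by simp
      next
        case False2: False
        thus ?thesis using False unfolding w_def by simp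
      qed
    qed
    thus ?thesis unfolding mf by simp
  qed
qed


lemma main_ineq:
  fixes v :: "'a::real_inner \<Rightarrow> 'a" and u :: "int \<Rightarrow> 'a" and k :: int
  assumes hec: "entropy_conservative v P h" and ged: "entropy_dissipative v P g"
    and a0: "0 \<le> \<alpha>" and a1: "\<alpha> \<le> 1" and A01: "A 0 1 \<ge> 0" and A10: "A 1 0 \<ge> 0"
    and B01: "B 0 1 \<ge> 0" and B10: "B 1 0 \<ge> 0"
    and AB: "ec_flux_combination p z A B"
  shows "v (u k) \<bullet> (flux_left p z A (mixfam \<alpha> g h) u k - flux_right p z B (mixfam \<alpha> g h) u k)
       \<le> flux_left p z A (mixfam \<alpha> (two_point_entropy_flux v P g)
                                   (two_point_entropy_flux v P h)) u k
         - flux_right p z B (mixfam \<alpha> (two_point_entropy_flux v P g)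
                                   (two_point_entropy_flux v P h)) u k"
proof -
  define Ht where "Ht = two_point_entropy_flux v P h"
  define Gt where "Gt = two_point_entropy_flux v P g"
  define w where "w = (\<lambda>l m. if l = 0 \<or> m = 0 then P (u k) else v (u k) \<bullet> h (u (k+l)) (u (k+m)) - Ht (u (k+l)) (u (k+m)))"
  define Z where "Z = Zset p z"
  define Z' where "Z' = Zset' p z"
  have fZ: "finite (Z \<times> Z)" "finite (Z' \<times> Z')" unfolding Z_def Z'_def Zset_def Zset'_def by auto
  have eL: "v (u k) \<bullet> flux_left p z A (mixfam \<alpha> g h) u k - flux_left p z A (mixfam \<alpha> Gt Ht) u k
     = (\<Sum>(l,m)\<in>Z \<times> Z. A l m * (v (u k) \<bullet> mixfam \<alpha> g h l m (u (k-1+l)) (u (k-1+m)) - mixfam \<alpha> Gt Ht l m (u (k-1+l)) (u (k-1+m))))"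
    unfolding flux_left_def inner_sum_right sum_subtractf[symmetric] Z_def
    by (rule sum.cong) (auto simp: algebra_simps)
  have eR: "v (u k) \<bullet> flux_right p z B (mixfam \<alpha> g h) u k - flux_right p z B (mixfam \<alpha> Gt Ht) u k
     = (\<Sum>(l,m)\<in>Z' \<times> Z'. B l m * (v (u k) \<bullet> mixfam \<alpha> g h l m (u (k+l)) (u (k+m)) - mixfam \<alpha> Gt Ht l m (u (k+l)) (u (k+m))))"
    unfolding flux_right_def inner_sum_right sum_subtractf[symmetric] Z'_def
    by (rule sum.cong) (auto simp: algebra_simps)
  have iL: "(\<Sum>(l,m)\<in>Z \<times> Z. A l m * (v (u k) \<bullet> mixfam \<alpha> g h l m (u (k-1+l)) (u (k-1+m)) - mixfam \<alpha> Gt Ht l m (u (k-1+l)) (u (k-1+m))))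
     \<le> (\<Sum>(l,m)\<in>Z \<times> Z. A l m * w (l-1) (m-1))"
    apply (rule sum_mono)
    using termL[OF hec ged a0 a1 A01 A10, where u=u and k=k] unfolding Ht_def Gt_def w_def by auto
  have iR: "(\<Sum>(l,m)\<in>Z' \<times> Z'. B l m * w l m) \<le>
     (\<Sum>(l,m)\<in>Z' \<times> Z'. B l m * (v (u k) \<bullet> mixfam \<alpha> g h l m (u (k+l)) (u (k+m)) - mixfam \<alpha> Gt Ht l m (u (k+l)) (u (k+m))))"
    apply (rule sum_mono)
    using termR[OF hec ged a0 a1 B01 B10, where u=u and k=k] unfolding Ht_def Gt_def w_def by auto
  define Fw where "Fw = (\<lambda>(l,m). Atilde p z A l m * w l m)"
  define sh where "sh = (\<lambda>(l::int,m::int). (l-1,m-1))"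
  have shi: "inj_on sh (Z \<times> Z)" unfolding sh_def inj_on_def by auto
  have shs: "sh ` (Z \<times> Z) \<subseteq> Z' \<times> Z'" unfolding sh_def Z_def Z'_def Zset_def Zset'_def by auto
  have re: "(\<Sum>(l,m)\<in>Z \<times> Z. A l m * w (l-1) (m-1)) = (\<Sum>(l,m)\<in>Z' \<times> Z'. Atilde p z A l m * w l m)"
  proof -
    have "(\<Sum>(l,m)\<in>Z \<times> Z. A l m * w (l-1) (m-1)) = (\<Sum>x\<in>Z \<times> Z. Fw (sh x))"
      by (rule sum.cong) (auto simp: Fw_def sh_def Atilde_def Z_def)
    also have "\<dots> = sum Fw (sh ` (Z \<times> Z))" by (simp add: sum.reindex[OF shi])
    also have "\<dots> = sum Fw (Z' \<times> Z')"
    proof (rule sum.mono_neutral_left[OF fZ(2) shs])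
      show "\<forall>i\<in>Z' \<times> Z' - sh ` (Z \<times> Z). Fw i = 0"
      proof
        fix i assume i: "i \<in> Z' \<times> Z' - sh ` (Z \<times> Z)"
        obtain l m where lm: "i = (l,m)" by force
        have "\<not> (l+1 \<in> Z \<and> m+1 \<in> Z)"
        proof
          assume "l+1 \<in> Z \<and> m+1 \<in> Z"
          hence "sh (l+1,m+1) \<in> sh ` (Z \<times> Z)" by auto
          thus False using i lm by (simp add: sh_def)
        qed
        thus "Fw i = 0" using lm unfolding Fw_def Atilde_def Z_def by auto
      qed
    qed
    finally show ?thesis by (simp add: Fw_def)
  qed
  have canc: "(\<Sum>(l,m)\<in>Z' \<times> Z'. Atilde p z A l m * w l m) - (\<Sum>(l,m)\<in>Z' \<times> Z'. B l m * w l m) = 0"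
  proof -
    have AB1: "(\<Sum>(l,m)\<in>Z' \<times> Z'. Atilde p z A l m) = 1" "(\<Sum>(l,m)\<in>Z' \<times> Z'. B l m) = 1"
      and AB3: "\<And>l m. l \<in> Z' - {0} \<Longrightarrow> m \<in> Z' - {0} \<Longrightarrow> Atilde p z A l m = B l m"
      using AB unfolding ec_flux_combination_def Z'_def by auto
    have "(\<Sum>(l,m)\<in>Z' \<times> Z'. Atilde p z A l m * w l m) - (\<Sum>(l,m)\<in>Z' \<times> Z'. B l m * w l m)
        = (\<Sum>(l,m)\<in>Z' \<times> Z'. (Atilde p z A l m - B l m) * w l m)"
      unfolding sum_subtractf[symmetric] by (rule sum.cong) (auto simp: algebra_simps)
    also have "\<dots> = (\<Sum>(l,m)\<in>Z' \<times> Z'. (Atilde p z A l m - B l m) * P (u k))"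
    proof (rule sum.cong)
      fix x assume x: "x \<in> Z' \<times> Z'"
      obtain l m where lm: "x = (l,m)" by force
      show "(case x of (l, m) \<Rightarrow> (Atilde p z A l m - B l m) * w l m) = (case x of (l, m) \<Rightarrow> (Atilde p z A l m - B l m) * P (u k))"
      proof (cases "l = 0 \<or> m = 0")
        case True thus ?thesis using lm by (simp add: w_def)
      next
        case False thus ?thesis using lm x AB3[of l m] by auto
      qed
    qed simp
    also have "\<dots> = ((\<Sum>(l,m)\<in>Z' \<times> Z'. Atilde p z A l m) - (\<Sum>(l,m)\<in>Z' \<times> Z'. B l m)) * P (u k)"
      unfolding sum_distrib_right sum_subtractf[symmetric] by (rule sum.cong) auto
    also have "\<dots> = 0" using AB1 by simp
    finally show ?thesis .
  qed
  have "v (u k) \<bullet> (flux_left p z A (mixfam \<alpha> g h) u k - flux_right p z B (mixfam \<alpha> g h) u k)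
      - (flux_left p z A (mixfam \<alpha> Gt Ht) u k - flux_right p z B (mixfam \<alpha> Gt Ht) u k) \<le> 0"
    using eL eR iL iR re canc by (simp add: inner_diff_right)
  thus ?thesis unfolding Ht_def Gt_def by simp
qed

theorem mainTheorem4:
  fixes f :: "'a::euclidean_space \<Rightarrow> 'a" and f' :: "'a \<Rightarrow> 'a \<Rightarrow> 'a"
    and U :: "'a \<Rightarrow> real" and F :: "'a \<Rightarrow> real" and v :: "'a \<Rightarrow> 'a"
    and h g :: "'a \<Rightarrow> 'a \<Rightarrow> 'a"
    and A B :: "int \<Rightarrow> int \<Rightarrow> real"
    and p z :: int and \<alpha> dx :: real
  assumes f_diff: "\<And>x. (f has_derivative f' x) (at x)"
      and U_grad: "\<And>x. (U has_derivative (\<lambda>w. v x \<bullet> w)) (at x)"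
      and U_strict_convex: "strictly_convex_on UNIV U"
      and F_entropy_flux: "\<And>x. (F has_derivative (\<lambda>w. v x \<bullet> f' x w)) (at x)"
      and dx_pos: "dx > 0"
      and p_ge: "p \<ge> 1" and z_ge: "1 \<le> z" and z_le: "z \<le> 2*p - 1"
      and h_ec: "entropy_conservative v (potential v f F) h"
      and h_sym: "symmetric_flux h"
      and h_cons: "consistent_flux f h"
      and h_smooth: "\<And>a b. (\<lambda>q. h (fst q) (snd q)) differentiable (at (a, b))"
      and AB: "ec_flux_combination p z A B"
      and g_ed: "entropy_dissipative v (potential v f F) g"
      and \<alpha>_ge: "0 \<le> \<alpha>" and \<alpha>_le: "\<alpha> \<le> 1"
      and A01: "A 0 1 \<ge> 0" and A10: "A 1 0 \<ge> 0"
      and B01: "B 0 1 \<ge> 0" and B10: "B 1 0 \<ge> 0"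
  shows
   "(\<forall>(u::int \<Rightarrow> 'a) k.
       v (u k) \<bullet> (flux_left p z A (mixfam \<alpha> g h) u k - flux_right p z B (mixfam \<alpha> g h) u k)
       \<le> flux_left p z A (mixfam \<alpha> (two_point_entropy_flux v (potential v f F) g)
                                   (two_point_entropy_flux v (potential v f F) h)) u k
         - flux_right p z B (mixfam \<alpha> (two_point_entropy_flux v (potential v f F) g)
                                   (two_point_entropy_flux v (potential v f F) h)) u k)
    \<and>
    (\<forall>(u::int \<Rightarrow> real \<Rightarrow> 'a) t k.
       (\<forall>j. (u j has_vector_derivative
               (1/dx) *\<^sub>R (flux_left p z A (mixfam \<alpha> g h) (\<lambda>i. u i t) j
                           - flux_right p z B (mixfam \<alpha> g h) (\<lambda>i. u i t) j)) (at t))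
       \<longrightarrow> (\<forall>D. ((\<lambda>s. U (u k s)) has_real_derivative D) (at t) \<longrightarrow>
              D \<le> (1/dx) * (flux_left p z A (mixfam \<alpha> (two_point_entropy_flux v (potential v f F) g)
                                   (two_point_entropy_flux v (potential v f F) h)) (\<lambda>i. u i t) k
                 - flux_right p z B (mixfam \<alpha> (two_point_entropy_flux v (potential v f F) g)
                                   (two_point_entropy_flux v (potential v f F) h)) (\<lambda>i. u i t) k)))"
proof -
  let ?P = "potential v f F"
  have I: "\<And>(u::int \<Rightarrow> 'a) k.
       v (u k) \<bullet> (flux_left p z A (mixfam \<alpha> g h) u k - flux_right p z B (mixfam \<alpha> g h) u k)
       \<le> flux_left p z A (mixfam \<alpha> (two_point_entropy_flux v ?P g)
                                   (two_point_entropy_flux v ?P h)) u k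
         - flux_right p z B (mixfam \<alpha> (two_point_entropy_flux v ?P g)
                                   (two_point_entropy_flux v ?P h)) u k"
    by (rule main_ineq[OF h_ec g_ed \<alpha>_ge \<alpha>_le A01 A10 B01 B10 AB])
  show ?thesis
  proof (intro conjI allI impI)
    fix u :: "int \<Rightarrow> 'a" and k
    show "v (u k) \<bullet> (flux_left p z A (mixfam \<alpha> g h) u k - flux_right p z B (mixfam \<alpha> g h) u k)
       \<le> flux_left p z A (mixfam \<alpha> (two_point_entropy_flux v ?P g)
                                   (two_point_entropy_flux v ?P h)) u k
         - flux_right p z B (mixfam \<alpha> (two_point_entropy_flux v ?P g)
                                   (two_point_entropy_flux v ?P h)) u k" by (rule I)
  next
    fix u :: "int \<Rightarrow> real \<Rightarrow> 'a" and t k D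
    assume hd: "\<forall>j. (u j has_vector_derivative
               (1/dx) *\<^sub>R (flux_left p z A (mixfam \<alpha> g h) (\<lambda>i. u i t) j
                           - flux_right p z B (mixfam \<alpha> g h) (\<lambda>i. u i t) j)) (at t)"
      and hD: "((\<lambda>s. U (u k s)) has_real_derivative D) (at t)"
    define X where "X = (1/dx) *\<^sub>R (flux_left p z A (mixfam \<alpha> g h) (\<lambda>i. u i t) k
                           - flux_right p z B (mixfam \<alpha> g h) (\<lambda>i. u i t) k)"
    have uk: "(u k has_derivative (\<lambda>x. x *\<^sub>R X)) (at t)"
      using hd unfolding X_def has_vector_derivative_def by blast
    have "((\<lambda>s. U (u k s)) has_derivative (\<lambda>x. v (u k t) \<bullet> (x *\<^sub>R X))) (at t)"
      using has_derivative_compose[OF uk U_grad] by (simp add: o_def)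
    moreover have "(\<lambda>x. v (u k t) \<bullet> (x *\<^sub>R X)) = (*) (v (u k t) \<bullet> X)"
      by (auto simp: inner_scaleR_right)
    ultimately have "((\<lambda>s. U (u k s)) has_real_derivative (v (u k t) \<bullet> X)) (at t)"
      by (simp add: has_field_derivative_def)
    hence DD: "D = v (u k t) \<bullet> X" using hD DERIV_unique by blast
    have "v (u k t) \<bullet> X = (1/dx) * (v (u k t) \<bullet> (flux_left p z A (mixfam \<alpha> g h) (\<lambda>i. u i t) k
                           - flux_right p z B (mixfam \<alpha> g h) (\<lambda>i. u i t) k))"
      unfolding X_def by (simp add: inner_scaleR_right)
    also have "\<dots> \<le> (1/dx) * (flux_left p z A (mixfam \<alpha> (two_point_entropy_flux v ?P g)
                                   (two_point_entropy_flux v ?P h)) (\<lambda>i. u i t) k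
                 - flux_right p z B (mixfam \<alpha> (two_point_entropy_flux v ?P g)
                                   (two_point_entropy_flux v ?P h)) (\<lambda>i. u i t) k)"
      using I[of "\<lambda>i. u i t" k] dx_pos by (intro mult_left_mono) auto
    finally show "D \<le> (1/dx) * (flux_left p z A (mixfam \<alpha> (two_point_entropy_flux v ?P g)
                                   (two_point_entropy_flux v ?P h)) (\<lambda>i. u i t) k
                 - flux_right p z B (mixfam \<alpha> (two_point_entropy_flux v ?P g)
                                   (two_point_entropy_flux v ?P h)) (\<lambda>i. u i t) k)"
      using DD by simp
  qed
qed

end
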